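(* Let $\Gamma$ be the graph with vertex set $\{v_{n,k}: n\in\mathbb Z,\ k\in\mathbb Z/10\mathbb Z\}$ and edge set $\{v_{n,k}v_{n,k+1}\}\cup\{v_{n,2k+1}v_{n+1,4k+2}\}$ ($n\in\mathbb Z$, $k\in\mathbb Z/10\mathbb Z$), and for $n\in\mathbb Z$ let $L_n=\{v_{n,k}: k\in\mathbb Z/10\mathbb Z\}$. Then every automorphism $\phi$ of $\Gamma$ preserves the partition $\{L_n: n\in\mathbb Z\}$, i.e. for every $n$ there is $m$ with $\phi(L_n)=L_m$.
   Context: Indices $k$ are taken modulo 10. *)

theory Defs
  imports Main "HOL-Library.Numeral_Type"
begin

(* Vertex v_{n,k} is the pair (n, k) with n :: int and k :: 10 (the ring Z/10Z). *)
type_synonym vtx = "int \<times> 10"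

definition gen_edge :: "vtx \<Rightarrow> vtx \<Rightarrow> bool" where
  "gen_edge a b \<longleftrightarrow>
     (fst b = fst a \<and> snd b = snd a + 1) \<or>
     (\<exists>k::10. fst b = fst a + 1 \<and> snd a = 2 * k + 1 \<and> snd b = 4 * k + 2)"

definition adj :: "vtx \<Rightarrow> vtx \<Rightarrow> bool" where
  "adj a b \<longleftrightarrow> gen_edge a b \<or> gen_edge b a"

definition graph_aut :: "(vtx \<Rightarrow> vtx) \<Rightarrow> bool" where
  "graph_aut \<phi> \<longleftrightarrow> bij \<phi> \<and> (\<forall>x y. adj (\<phi> x) (\<phi> y) \<longleftrightarrow> adj x y)"

definition level :: "int \<Rightarrow> vtx set" where
  "level n = {v. fst v = n}"

end

theory Submission imports Defs begin
lemma k10: "(k::10) \<in> {0,1,2,3,4,5,6,7,8,9}"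
proof (induct k)
  case (of_int z)
  then have "z \<ge> 0" "z < 10" by simp_all
  then have "z = 0 \<or> z = 1 \<or> z = 2 \<or> z = 3 \<or> z = 4 \<or> z = 5 \<or> z = 6 \<or> z = 7 \<or> z = 8 \<or> z = 9" by presburger
  then show ?case by auto
qed

definition nb :: "vtx \<Rightarrow> vtx list" where
  "nb v = [(fst v, snd v + 1), (fst v, snd v - 1),
     if snd v \<in> {1,3,5,7,9} then (fst v + 1, 2 * snd v) else (fst v - 1, 3 * snd v + 5)]"

lemma up_iff: "(\<exists>k::10. a = 2 * k + 1 \<and> b = 4 * k + 2) \<longleftrightarrow> (a \<in> {1,3,5,7,9} \<and> b = 2 * a)"
proof
  assume "\<exists>k::10. a = 2 * k + 1 \<and> b = 4 * k + 2"
  then obtain k where "a = 2 * k + 1" "b = 4 * k + 2" by blast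
  then show "a \<in> {1,3,5,7,9} \<and> b = 2 * a" using k10[of k] by (elim insertE emptyE) simp_all
next
  assume h: "a \<in> {1,3,5,7,9} \<and> b = 2 * a"
  then have "a \<in> {1,3,5,7,9}" "b = 2 * a" by auto
  then show "\<exists>k::10. a = 2 * k + 1 \<and> b = 4 * k + 2"
  proof (elim insertE emptyE)
    assume "a = 1" "b = 2 * a" then show ?thesis by (intro exI[of _ 0]) simp
  next
    assume "a = 3" "b = 2 * a" then show ?thesis by (intro exI[of _ 1]) simp
  next
    assume "a = 5" "b = 2 * a" then show ?thesis by (intro exI[of _ 2]) simp
  next
    assume "a = 7" "b = 2 * a" then show ?thesis by (intro exI[of _ 3]) simp
  next
    assume "a = 9" "b = 2 * a" then show ?thesis by (intro exI[of _ 4]) simp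
  qed
qed

lemma updown: "(l \<in> {1,3,5,7,9} \<and> k = 2 * l) \<longleftrightarrow> (k \<notin> {1,3,5,7,9} \<and> l = 3 * (k::10) + 5)"
proof
  assume "l \<in> {1,3,5,7,9} \<and> k = 2 * l"
  then have "l \<in> {1,3,5,7,9}" "k = 2 * l" by auto
  then show "k \<notin> {1,3,5,7,9} \<and> l = 3 * (k::10) + 5" by (elim insertE emptyE) simp_all
next
  assume "k \<notin> {1,3,5,7,9} \<and> l = 3 * (k::10) + 5"
  then have "k \<notin> {1,3,5,7,9}" "l = 3 * (k::10) + 5" by auto
  then show "l \<in> {1,3,5,7,9} \<and> k = 2 * l" using k10[of k] by (elim insertE emptyE) simp_all
qed

lemma ge: "gen_edge (n,k) (m,l) \<longleftrightarrow> (m = n \<and> l = k + 1) \<or> (m = n + 1 \<and> k \<in> {1,3,5,7,9} \<and> l = 2 * k)"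
  unfolding gen_edge_def using up_iff[of k l] by auto

lemma adj_nb: "adj x y \<longleftrightarrow> y \<in> set (nb x)"
proof -
  obtain n k m l where x: "x = (n,k)" and y: "y = (m,l)" by fastforce
  have e1: "k = l + 1 \<longleftrightarrow> l = k - 1" by (auto simp: algebra_simps)
  have e2: "n = m + 1 \<longleftrightarrow> m = n - 1" by auto
  show ?thesis
    unfolding adj_def x y ge nb_def using updown[of l k] e1 e2 by auto
qed
fun walk :: "vtx list \<Rightarrow> bool" where
  "walk [] = True" | "walk [x] = True" | "walk (x # y # r) = (adj x y \<and> walk (y # r))"

fun gen :: "nat \<Rightarrow> vtx \<Rightarrow> vtx list \<Rightarrow> vtx list list" where
  "gen 0 a F = [[a]]"
| "gen (Suc m) a F = concat (map (\<lambda>y. if y \<in> set F then [] else map (\<lambda>p. a # p) (gen m y (a # F))) (nb a))"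

definition cnt :: "vtx \<Rightarrow> vtx \<Rightarrow> vtx \<Rightarrow> nat" where
  "cnt v a b = length (remdups (filter (\<lambda>p. last p = b) (gen 6 a [v])))"

definition S :: "vtx \<Rightarrow> vtx \<Rightarrow> vtx \<Rightarrow> vtx list set" where
  "S v a b = {p. length p = 7 \<and> hd p = a \<and> walk p \<and> last p = b \<and> distinct (v # p)}"

lemma can10[simp]: "(10::10) = 0" "(11::10) = 1" "(12::10) = 2" "(13::10) = 3" "(14::10) = 4" "(15::10) = 5" "(16::10) = 6" "(17::10) = 7" "(18::10) = 8" "(19::10) = 9" "(20::10) = 0" "(21::10) = 1" "(22::10) = 2" "(23::10) = 3" "(24::10) = 4" "(25::10) = 5" "(26::10) = 6" "(27::10) = 7" "(28::10) = 8" "(29::10) = 9" "(30::10) = 0" "(31::10) = 1" "(32::10) = 2" "(33::10) = 3" "(34::10) = 4" "(35::10) = 5" "(36::10) = 6" "(37::10) = 7" "(38::10) = 8" "(39::10) = 9"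
  by simp_all

lemma neg10[simp]: "(-1::10) = 9" "(-2::10) = 8" "(-3::10) = 7" "(-4::10) = 6" "(-5::10) = 5"
  "(-6::10) = 4" "(-7::10) = 3" "(-8::10) = 2" "(-9::10) = 1"
  by simp_all

lemma nb_neq: "y \<in> set (nb a) \<Longrightarrow> y \<noteq> a"
  by (auto simp: nb_def prod_eq_iff split: if_splits)

lemma gen_set: "a \<notin> set F \<Longrightarrow>
  set (gen m a F) = {p. length p = Suc m \<and> hd p = a \<and> walk p \<and> distinct p \<and> set p \<inter> set F = {}}"
proof (induction m arbitrary: a F)
  case 0
  show ?case using 0 by (auto simp: length_Suc_conv)
next
  case (Suc m)
  show ?case
  proof (intro set_eqI iffI)
    fix p assume "p \<in> set (gen (Suc m) a F)"
    then obtain y q where y: "y \<in> set (nb a)" "y \<notin> set F" and q: "q \<in> set (gen m y (a # F))" and p: "p = a # q"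
      by (auto split: if_splits)
    have "y \<noteq> a" using y(1) by (rule nb_neq)
    with q Suc.IH[of y "a # F"] y have q': "length q = Suc m" "hd q = y" "walk q" "distinct q" "set q \<inter> set (a # F) = {}" by auto
    then obtain r where "q = y # r" by (cases q) auto
    then show "p \<in> {p. length p = Suc (Suc m) \<and> hd p = a \<and> walk p \<and> distinct p \<and> set p \<inter> set F = {}}"
      using p q' y Suc.prems by (auto simp add: adj_nb)
  next
    fix p assume "p \<in> {p. length p = Suc (Suc m) \<and> hd p = a \<and> walk p \<and> distinct p \<and> set p \<inter> set F = {}}"
    then obtain y r where p: "p = a # y # r" and l: "length r = m" and w: "adj a y" "walk (y # r)"
       and d: "distinct (a # y # r)" "set (a # y # r) \<inter> set F = {}"
      by (auto simp: length_Suc_conv)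
    have "y # r \<in> set (gen m y (a # F))" using Suc.IH[of y "a # F"] l w d by auto
    then show "p \<in> set (gen (Suc m) a F)" using p w(1) d by (auto simp: adj_nb)
  qed
qed

lemma card_S: assumes False: "a \<noteq> v" shows "card (S v a b) = cnt v a b"
proof -
  have g: "set (gen 6 a [v]) = {p. length p = 7 \<and> hd p = a \<and> walk p \<and> distinct p \<and> set p \<inter> set [v] = {}}"
    using gen_set[of a "[v]" 6] False by (simp del: gen.simps)
  have "S v a b = set (filter (\<lambda>p. last p = b) (gen 6 a [v]))"
    unfolding S_def set_filter g by auto
  then show ?thesis unfolding cnt_def by (simp add: length_remdups_card_conv)
qed

lemma aut_adj: "graph_aut \<phi> \<Longrightarrow> adj (\<phi> x) (\<phi> y) = adj x y"
  unfolding graph_aut_def by blast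

lemma walk_map: "graph_aut \<phi> \<Longrightarrow> walk (map \<phi> p) = walk p"
  by (induction p rule: walk.induct) (auto simp: aut_adj)

lemma adj_sym: "adj x y = adj y x"
  unfolding adj_def by blast

lemma walk_snoc: "walk (xs @ [y, z]) = (walk (xs @ [y]) \<and> adj y z)"
  by (induction xs rule: walk.induct) auto

lemma walk_rev: "walk (rev p) = walk p"
proof (induction p rule: walk.induct)
  case (3 x y r)
  have "rev (x # y # r) = rev r @ [y, x]" by simp
  then show ?case using 3 walk_snoc[of "rev r" y x] adj_sym[of x y] by auto
qed auto

lemma card_rev: "card (S v a b) = card (S v b a)"
proof -
  have "rev ` S v a b = S v b a"
  proof (intro set_eqI iffI)
    fix q assume "q \<in> rev ` S v a b"
    then show "q \<in> S v b a" unfolding S_def by (auto simp: walk_rev hd_rev last_rev)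
  next
    fix q assume "q \<in> S v b a"
    then have "rev q \<in> S v a b" unfolding S_def by (auto simp: walk_rev hd_rev last_rev)
    then show "q \<in> rev ` S v a b" by (metis image_eqI rev_rev_ident)
  qed
  then show ?thesis by (metis card_image inj_on_def rev_rev_ident)
qed

lemma S_image: assumes g: "graph_aut \<phi>" shows "map \<phi> ` S v a b = S (\<phi> v) (\<phi> a) (\<phi> b)"
proof -
  have b: "bij \<phi>" using g unfolding graph_aut_def by auto
  then have inj: "inj \<phi>" by (rule bij_is_inj)
  have d: "distinct (map \<phi> q) = distinct q" for q using inj by (simp add: distinct_map inj_on_def) (metis inj injD inj_on_def)
  show ?thesis
  proof (intro set_eqI iffI)
    fix q assume "q \<in> map \<phi> ` S v a b"
    then obtain p where "p \<in> S v a b" "q = map \<phi> p" by auto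
    moreover then have "p \<noteq> []" unfolding S_def by auto
    ultimately show "q \<in> S (\<phi> v) (\<phi> a) (\<phi> b)" unfolding S_def
      using walk_map[OF g, of p] d[of "v # p"] by (auto simp: hd_map last_map)
  next
    fix q assume q: "q \<in> S (\<phi> v) (\<phi> a) (\<phi> b)"
    define p where "p = map (inv \<phi>) q"
    have qp: "q = map \<phi> p" unfolding p_def by (simp add: bij_is_surj[OF b] surj_f_inv_f map_idI)
    have ne: "p \<noteq> []" using q unfolding S_def qp by auto
    have "p \<in> S v a b" using q ne unfolding S_def qp
      using walk_map[OF g, of p] d[of "v # p"] inj by (auto simp: hd_map last_map inj_eq)
    then show "q \<in> map \<phi> ` S v a b" using qp by auto
  qed
qed

lemma card_S_aut: assumes g: "graph_aut \<phi>" shows "card (S (\<phi> v) (\<phi> a) (\<phi> b)) = card (S v a b)"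
proof -
  have "inj \<phi>" using g unfolding graph_aut_def by (auto intro: bij_is_inj)
  then have "inj (map \<phi>)" by (simp add: inj_mapI)
  then show ?thesis using S_image[OF g] by (metis card_image inj_on_subset subset_UNIV)
qed

lemma aut_of_nb: assumes "bij f" "\<And>x. set (nb (f x)) = f ` set (nb x)" shows "graph_aut f"
proof -
  have "inj f" using assms(1) by (rule bij_is_inj)
  then show ?thesis unfolding graph_aut_def using assms by (auto simp: adj_nb inj_image_mem_iff)
qed

definition rho :: "vtx \<Rightarrow> vtx" ("\<rho>") where "\<rho> v = (fst v, - snd v)"
definition sh :: "int \<Rightarrow> vtx \<Rightarrow> vtx" where "sh s v = (fst v + s, snd v)"

lemma rho_aut: "graph_aut \<rho>"
proof (rule aut_of_nb)
  have "\<rho> (\<rho> v) = v" for v by (simp add: rho_def)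
  then show "bij \<rho>" by (metis bijI' )
next
  fix x :: vtx
  obtain n k where x: "x = (n,k)" by fastforce
  have "set (nb (\<rho> x)) = {(n, -k+1), (n, -k-1), if -k \<in> {1,3,5,7,9} then (n+1, 2*(-k)) else (n - 1, 3 * (-k) + 5)}"
    by (simp add: nb_def rho_def x)
  also have "\<dots> = \<rho> ` {(n, k+1), (n, k-1), if k \<in> {1,3,5,7,9} then (n+1, 2*k) else (n - 1, 3 * k + 5)}"
    using k10[of k] by (elim insertE emptyE) (simp_all add: rho_def insert_commute)
  also have "\<dots> = \<rho> ` set (nb x)" by (simp add: nb_def x)
  finally show "set (nb (\<rho> x)) = \<rho> ` set (nb x)" .
qed

lemma sh_aut: "graph_aut (sh s)"
proof (rule aut_of_nb)
  have "sh (-s) (sh s v) = v" "sh s (sh (-s) v) = v" for v by (simp_all add: sh_def)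
  then show "bij (sh s)" by (metis bij_betw_byWitness subset_UNIV image_subset_iff UNIV_I)
next
  fix x :: vtx
  show "set (nb (sh s x)) = sh s ` set (nb x)" by (simp add: nb_def sh_def algebra_simps)
qed

definition C0 :: "10 \<Rightarrow> vtx" where
  "C0 k = (if k \<in> {1,3,5,7,9} then (1, 2*k) else (-1, 3*k+5))"

definition F :: "10 \<Rightarrow> bool" where
  "F k \<longleftrightarrow> 3 \<le> card (S (0,k) (0,k+1) (0,k-1)) \<and> 3 \<le> card (S (0,k) (0,k-1) (0,k+1))
     \<and> card (S (0,k) (C0 k) (0,k+1)) < 3 \<and> card (S (0,k) (C0 k) (0,k-1)) < 3"

lemma cnt0: "3 \<le> cnt (0,0) (0,0+1) (0,0-1)" "cnt (0,0) (C0 0) (0,0+1) < 3" "cnt (0,0) (C0 0) (0,0-1) < 3"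
  by (simp_all add: cnt_def nb_def C0_def numeral_eq_Suc)

lemma cnt1: "3 \<le> cnt (0,1) (0,1+1) (0,1-1)" "cnt (0,1) (C0 1) (0,1+1) < 3" "cnt (0,1) (C0 1) (0,1-1) < 3"
  by (simp_all add: cnt_def nb_def C0_def numeral_eq_Suc)

lemma cnt2: "3 \<le> cnt (0,2) (0,2+1) (0,2-1)" "cnt (0,2) (C0 2) (0,2+1) < 3" "cnt (0,2) (C0 2) (0,2-1) < 3"
  by (simp_all add: cnt_def nb_def C0_def numeral_eq_Suc)

lemma cnt3: "3 \<le> cnt (0,3) (0,3+1) (0,3-1)" "cnt (0,3) (C0 3) (0,3+1) < 3" "cnt (0,3) (C0 3) (0,3-1) < 3"
  by (simp_all add: cnt_def nb_def C0_def numeral_eq_Suc)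

lemma cnt4: "3 \<le> cnt (0,4) (0,4+1) (0,4-1)" "cnt (0,4) (C0 4) (0,4+1) < 3" "cnt (0,4) (C0 4) (0,4-1) < 3"
  by (simp_all add: cnt_def nb_def C0_def numeral_eq_Suc)

lemma cnt5: "3 \<le> cnt (0,5) (0,5+1) (0,5-1)" "cnt (0,5) (C0 5) (0,5+1) < 3" "cnt (0,5) (C0 5) (0,5-1) < 3"
  by (simp_all add: cnt_def nb_def C0_def numeral_eq_Suc)

lemma F0: "F 0"
  using cnt0 card_rev[of "(0,0)" "(0,0-1)" "(0,0+1)"] unfolding F_def by (simp add: card_S C0_def)

lemma F1: "F 1"
  using cnt1 card_rev[of "(0,1)" "(0,1-1)" "(0,1+1)"] unfolding F_def by (simp add: card_S C0_def)

lemma F2: "F 2"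
  using cnt2 card_rev[of "(0,2)" "(0,2-1)" "(0,2+1)"] unfolding F_def by (simp add: card_S C0_def)

lemma F3: "F 3"
  using cnt3 card_rev[of "(0,3)" "(0,3-1)" "(0,3+1)"] unfolding F_def by (simp add: card_S C0_def)

lemma F4: "F 4"
  using cnt4 card_rev[of "(0,4)" "(0,4-1)" "(0,4+1)"] unfolding F_def by (simp add: card_S C0_def)

lemma F5: "F 5"
  using cnt5 card_rev[of "(0,5)" "(0,5-1)" "(0,5+1)"] unfolding F_def by (simp add: card_S C0_def)

lemma F6: "F 6"
proof -
  have e: "card (S (0,6) a b) = card (S (0,4) (\<rho> a) (\<rho> b))" for a b
    using card_S_aut[OF rho_aut, of "(0,6)" a b] by (simp add: rho_def)
  show ?thesis using F4 unfolding F_def e by (simp add: rho_def C0_def card_rev[of "(0,4)"])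
qed

lemma F7: "F 7"
proof -
  have e: "card (S (0,7) a b) = card (S (0,3) (\<rho> a) (\<rho> b))" for a b
    using card_S_aut[OF rho_aut, of "(0,7)" a b] by (simp add: rho_def)
  show ?thesis using F3 unfolding F_def e by (simp add: rho_def C0_def card_rev[of "(0,3)"])
qed

lemma F8: "F 8"
proof -
  have e: "card (S (0,8) a b) = card (S (0,2) (\<rho> a) (\<rho> b))" for a b
    using card_S_aut[OF rho_aut, of "(0,8)" a b] by (simp add: rho_def)
  show ?thesis using F2 unfolding F_def e by (simp add: rho_def C0_def card_rev[of "(0,2)"])
qed

lemma F9: "F 9"
proof -
  have e: "card (S (0,9) a b) = card (S (0,1) (\<rho> a) (\<rho> b))" for a b
    using card_S_aut[OF rho_aut, of "(0,9)" a b] by (simp add: rho_def)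
  show ?thesis using F1 unfolding F_def e by (simp add: rho_def C0_def card_rev[of "(0,1)"])
qed

lemma F_all: "F k"
  using k10[of k] F0 F1 F2 F3 F4 F5 F6 F7 F8 F9 by (elim insertE emptyE) simp_all

lemma nb_C0: "nb (n,k) ! 2 = sh n (C0 k)"
  by (simp add: nb_def C0_def sh_def)

lemma good:
  fixes n :: int and k :: 10
  defines "x \<equiv> (n,k)" and "A \<equiv> (n,k+1)" and "B \<equiv> (n,k-1)" and "C \<equiv> nb (n,k) ! 2"
  shows "3 \<le> card (S x A B)" "3 \<le> card (S x B A)" "card (S x C A) < 3" "card (S x C B) < 3"
proof -
  have e: "card (S (sh n v) (sh n a) (sh n b)) = card (S v a b)" for v a b
    by (rule card_S_aut[OF sh_aut])
  have x: "x = sh n (0,k)" and A: "A = sh n (0,k+1)" and B: "B = sh n (0,k-1)" and C: "C = sh n (C0 k)"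
    by (simp_all add: x_def A_def B_def C_def sh_def nb_C0)
  show "3 \<le> card (S x A B)" "3 \<le> card (S x B A)" "card (S x C A) < 3" "card (S x C B) < 3"
    using F_all[of k] unfolding F_def x A B C e by auto
qed

lemma kpm: "(k::10) + 1 \<noteq> k - 1"
  using k10[of k] by (elim insertE emptyE) simp_all

definition R :: "vtx \<Rightarrow> vtx \<Rightarrow> bool" where
  "R x y \<longleftrightarrow> adj x y \<and> (\<exists>z. adj x z \<and> z \<noteq> y \<and> 3 \<le> card (S x y z))"

lemma R_aut: assumes g: "graph_aut \<phi>" shows "R (\<phi> x) (\<phi> y) \<longleftrightarrow> R x y"
proof -
  have b: "bij \<phi>" using g unfolding graph_aut_def by auto
  have inj: "inj \<phi>" using b by (rule bij_is_inj)
  have surj: "surj \<phi>" using b by (rule bij_is_surj)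
  show ?thesis
  proof
    assume "R (\<phi> x) (\<phi> y)"
    then obtain z where z: "adj (\<phi> x) (\<phi> y)" "adj (\<phi> x) z" "z \<noteq> \<phi> y" "3 \<le> card (S (\<phi> x) (\<phi> y) z)"
      unfolding R_def by blast
    obtain z' where z': "z = \<phi> z'" using surj by (metis surjD)
    show "R x y" unfolding R_def using z z' aut_adj[OF g] card_S_aut[OF g] by (metis)
  next
    assume "R x y"
    then obtain z where z: "adj x y" "adj x z" "z \<noteq> y" "3 \<le> card (S x y z)"
      unfolding R_def by blast
    show "R (\<phi> x) (\<phi> y)" unfolding R_def
      using z aut_adj[OF g] card_S_aut[OF g] inj by (metis injD)
  qed
qed

lemma R_iff: "R x y \<longleftrightarrow> adj x y \<and> fst y = fst x"
proof -
  obtain n k where x: "x = (n,k)" by fastforce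
  define A where "A = (n, k+1)"
  define B where "B = (n, k-1)"
  define C where "C = nb (n,k) ! 2"
  have nbx: "set (nb x) = {A, B, C}" by (simp add: nb_def x A_def B_def C_def)
  have AB: "A \<noteq> B" using kpm by (simp add: A_def B_def)
  have fC: "fst C \<noteq> n" by (simp add: C_def nb_def)
  have CA: "C \<noteq> A" "C \<noteq> B" using fC by (auto simp: A_def B_def)
  have g: "3 \<le> card (S x A B)" "3 \<le> card (S x B A)" "card (S x C A) < 3" "card (S x C B) < 3"
    using good[of n k] by (simp_all add: x A_def B_def C_def)
  show ?thesis
  proof
    assume "R x y"
    then obtain z where y: "y \<in> {A,B,C}" and z: "z \<in> {A,B,C}" "z \<noteq> y" "3 \<le> card (S x y z)"
      unfolding R_def adj_nb nbx by blast
    have "y \<noteq> C" using z g by auto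
    then show "adj x y \<and> fst y = fst x" using y unfolding adj_nb nbx by (auto simp: x A_def B_def)
  next
    assume h: "adj x y \<and> fst y = fst x"
    have "y \<in> {A,B,C}" using h unfolding adj_nb nbx by blast
    moreover have "y \<noteq> C" using h fC x by auto
    ultimately have "y = A \<or> y = B" by blast
    then show "R x y"
    proof
      assume "y = A" then show ?thesis unfolding R_def adj_nb nbx using AB g by (intro conjI exI[of _ B]) auto
    next
      assume "y = B" then show ?thesis unfolding R_def adj_nb nbx using AB g by (intro conjI exI[of _ A]) auto
    qed
  qed
qed

lemma level_const:
  assumes g: "graph_aut \<phi>"
  shows "fst (\<phi> (n,k)) = fst (\<phi> (n,0))"
proof -
  have step: "fst (\<phi> (n, j + 1)) = fst (\<phi> (n, j))" for j
  proof -
    have "adj (n,j) (n,j+1) \<and> fst (n,j+1) = fst (n,j)" by (simp add: adj_def gen_edge_def)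
    then have "R (n,j) (n,j+1)" using R_iff by blast
    then have "R (\<phi> (n,j)) (\<phi> (n,j+1))" using R_aut[OF g] by blast
    then show ?thesis using R_iff by auto
  qed
  have "fst (\<phi> (n, of_nat i)) = fst (\<phi> (n,0))" for i :: nat
  proof (induction i)
    case (Suc i)
    then show ?case using step[of "of_nat i"] by (simp add: add.commute)
  qed simp
  moreover have "\<exists>i::nat. k = of_nat i"
    using k10[of k] by (elim insertE emptyE) (metis of_nat_numeral of_nat_0 of_nat_1)+
  ultimately show ?thesis by auto
qed

lemma inv_aut: assumes g: "graph_aut \<phi>" shows "graph_aut (inv \<phi>)"
proof -
  have b: "bij \<phi>" using g unfolding graph_aut_def by auto
  have "adj (inv \<phi> x) (inv \<phi> y) = adj x y" for x y
    using aut_adj[OF g, of "inv \<phi> x" "inv \<phi> y"] by (simp add: bij_inv_eq_iff[OF b] surj_f_inv_f[OF bij_is_surj[OF b]])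
  then show ?thesis unfolding graph_aut_def using bij_imp_bij_inv[OF b] by auto
qed

theorem mainTheorem4:
  assumes "graph_aut \<phi>"
  shows "\<forall>n. \<exists>m. \<phi> ` level n = level m"
proof
  fix n
  let ?m = "fst (\<phi> (n,0))"
  have b: "bij \<phi>" using assms unfolding graph_aut_def by auto
  have gi: "graph_aut (inv \<phi>)" by (rule inv_aut[OF assms])
  have "\<phi> ` level n = level ?m"
  proof (intro set_eqI iffI)
    fix y assume "y \<in> \<phi> ` level n"
    then obtain x where "x \<in> level n" "y = \<phi> x" by auto
    then show "y \<in> level ?m" using level_const[OF assms, of n "snd x"] by (auto simp: level_def)
  next
    fix y assume y: "y \<in> level ?m"
    have i1: "inv \<phi> (\<phi> v) = v" for v using b by (simp add: bij_is_inj)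
    have i2: "\<phi> (inv \<phi> v) = v" for v using b by (simp add: bij_is_surj surj_f_inv_f)
    have yy: "y = (?m, snd y)" using y by (simp add: level_def prod_eq_iff)
    have "fst (inv \<phi> y) = fst (inv \<phi> (?m, 0))"
      using level_const[OF gi, of ?m "snd y"] yy by simp
    also have "\<dots> = fst (inv \<phi> (\<phi> (n,0)))"
      using level_const[OF gi, of ?m "snd (\<phi> (n,0))"] by (simp add: prod_eq_iff)
    also have "\<dots> = n" by (simp add: i1)
    finally have "inv \<phi> y \<in> level n" by (simp add: level_def)
    then show "y \<in> \<phi> ` level n" using i2 by (metis image_eqI)
  qed
  then show "\<exists>m. \<phi> ` level n = level m" by blast
qed

end
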